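(* Let $w\in\mathfrak{S}_n$ be right-almost-reducible at $i$. Then (1) $\max\{w(1),\ldots,w(i-1)\}=i+1$; (2) $w(i)>i+1$; and (3) the elements of $\{1,\ldots,i+1\}\setminus\{w(1),\ldots,w(i-1)\}$ appear out of order in the one-line notation of $w$ (i.e. if this set is $\{a<b\}$ then $w^{-1}(b)<w^{-1}(a)$).
   Context: $\mathfrak{S}_n$ has simple generators $S=\{s_1,\ldots,s_{n-1}\}$, $s_i=(i\ i{+}1)$, products are compositions $(uv)(m)=u(v(m))$, and $w$ is written in one-line notation $w(1)\cdots w(n)$; $\ell$ is length. $\supp(x)$ is the set of simple generators in a reduced word of $x$; $D_L(x)=\{s:\ell(sx)<\ell(x)\}$, $D_R(x)=\{s:\ell(xs)<\ell(x)\}$. For $J\subseteq S$, $x=x^Jx_J$ is the parabolic decomposition ($x_J\in W_J=\langle J\rangle$, $x^J$ minimal length in $xW_J$); it is a BP-decomposition if $\supp(x^J)\cap J\subseteq D_L(x_J)$. $w$ is Bruhat irreducible if $\supp(w)=S$ and $w$ is not a product $w'w''$ with $w',w''\ne e$ and disjoint supports. A Bruhat irreducible $w$ is almost reducible at $(J,i)$ if $w=w^Jw_J$ is a BP-decomposition with $\supp(w^J)\cap J=\{s_i\}$ and $s_i\notin D_L(w)\cup D_R(w)$. $w$ is right-almost-reducible at $i$ if it is Bruhat irreducible and almost reducible at $(\{s_i,\ldots,s_{n-1}\},i)$. *)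

theory Defs
  imports "HOL-Combinatorics.Permutations" "HOL-Combinatorics.Transposition"
begin

text \<open>Symmetric group S_n: permutations of {1..n} (identity outside), composition
  (u o v)(m) = u (v m). Simple generators s_i = (i i+1), indexed by i in {1..<n}.\<close>

definition perm_Sn :: "nat \<Rightarrow> (nat \<Rightarrow> nat) \<Rightarrow> bool" where
  "perm_Sn n x \<longleftrightarrow> x permutes {1..n}"

definition Sgens :: "nat \<Rightarrow> nat set" where
  "Sgens n = {1..<n}"

definition sgen :: "nat \<Rightarrow> nat \<Rightarrow> nat" where
  "sgen i = transpose i (Suc i)"

definition word_eval :: "nat list \<Rightarrow> nat \<Rightarrow> nat" where
  "word_eval ws = foldr (\<lambda>i f. sgen i \<circ> f) ws id"

definition is_word :: "nat \<Rightarrow> nat list \<Rightarrow> (nat \<Rightarrow> nat) \<Rightarrow> bool" where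
  "is_word n ws x \<longleftrightarrow> set ws \<subseteq> Sgens n \<and> word_eval ws = x"

definition len :: "nat \<Rightarrow> (nat \<Rightarrow> nat) \<Rightarrow> nat" where
  "len n x = (LEAST k. \<exists>ws. is_word n ws x \<and> length ws = k)"

definition reduced_word :: "nat \<Rightarrow> nat list \<Rightarrow> (nat \<Rightarrow> nat) \<Rightarrow> bool" where
  "reduced_word n ws x \<longleftrightarrow> is_word n ws x \<and> length ws = len n x"

text \<open>Support: generators occurring in a reduced word (independent of the reduced word).\<close>
definition supp :: "nat \<Rightarrow> (nat \<Rightarrow> nat) \<Rightarrow> nat set" where
  "supp n x = {i. \<exists>ws. reduced_word n ws x \<and> i \<in> set ws}"

definition DL :: "nat \<Rightarrow> (nat \<Rightarrow> nat) \<Rightarrow> nat set" where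
  "DL n x = {i \<in> Sgens n. len n (sgen i \<circ> x) < len n x}"

definition DR :: "nat \<Rightarrow> (nat \<Rightarrow> nat) \<Rightarrow> nat set" where
  "DR n x = {i \<in> Sgens n. len n (x \<circ> sgen i) < len n x}"

definition parabolic :: "nat set \<Rightarrow> (nat \<Rightarrow> nat) set" where
  "parabolic J = {x. \<exists>ws. set ws \<subseteq> J \<and> word_eval ws = x}"

definition min_coset_rep :: "nat \<Rightarrow> nat set \<Rightarrow> (nat \<Rightarrow> nat) \<Rightarrow> (nat \<Rightarrow> nat) \<Rightarrow> bool" where
  "min_coset_rep n J x u \<longleftrightarrow>
     u \<in> (\<lambda>v. x \<circ> v) ` parabolic J \<and> (\<forall>v \<in> parabolic J. len n u \<le> len n (x \<circ> v))"

text \<open>x = x^J x_J with x^J = u, x_J = u^{-1} x is a BP-decomposition.\<close>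
definition BP_decomp :: "nat \<Rightarrow> nat set \<Rightarrow> (nat \<Rightarrow> nat) \<Rightarrow> (nat \<Rightarrow> nat) \<Rightarrow> bool" where
  "BP_decomp n J x u \<longleftrightarrow> min_coset_rep n J x u \<and> supp n u \<inter> J \<subseteq> DL n (inv u \<circ> x)"

definition bruhat_irreducible :: "nat \<Rightarrow> (nat \<Rightarrow> nat) \<Rightarrow> bool" where
  "bruhat_irreducible n w \<longleftrightarrow> perm_Sn n w \<and> supp n w = Sgens n \<and>
     \<not> (\<exists>u v. perm_Sn n u \<and> perm_Sn n v \<and> w = u \<circ> v \<and> u \<noteq> id \<and> v \<noteq> id
              \<and> supp n u \<inter> supp n v = {})"

definition almost_reducible :: "nat \<Rightarrow> (nat \<Rightarrow> nat) \<Rightarrow> nat set \<Rightarrow> nat \<Rightarrow> bool" where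
  "almost_reducible n w J i \<longleftrightarrow> bruhat_irreducible n w \<and> J \<subseteq> Sgens n \<and>
     (\<exists>u. BP_decomp n J w u \<and> supp n u \<inter> J = {i}) \<and> i \<notin> DL n w \<union> DR n w"

definition right_almost_reducible :: "nat \<Rightarrow> (nat \<Rightarrow> nat) \<Rightarrow> nat \<Rightarrow> bool" where
  "right_almost_reducible n w i \<longleftrightarrow> almost_reducible n w {i..<n} i"

end

theory Submission
  imports Defs
begin


lemma word_eval_Nil[simp]: "word_eval [] = id"
  by (simp add: word_eval_def)
lemma word_eval_Cons[simp]: "word_eval (a # ws) = sgen a \<circ> word_eval ws"
  by (simp add: word_eval_def)
lemma word_eval_append: "word_eval (ws @ vs) = word_eval ws \<circ> word_eval vs"
  by (induction ws) (auto simp: o_assoc)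
lemma word_eval_snoc: "word_eval (ws @ [a]) = word_eval ws \<circ> sgen a"
  by (simp add: word_eval_append)

lemma sgen_invol[simp]: "sgen j \<circ> sgen j = id"
  by (simp add: sgen_def)
lemma sgen_invol'[simp]: "sgen j (sgen j x) = x"
  by (simp add: sgen_def)

lemma sgen_permutes: "j \<in> Sgens n \<Longrightarrow> sgen j permutes {1..n}"
  unfolding sgen_def Sgens_def by (rule permutes_swap_id) auto

lemma word_eval_permutes: "set ws \<subseteq> Sgens n \<Longrightarrow> word_eval ws permutes {1..n}"
  proof (induction ws)
  case Nil then show ?case by (simp only: word_eval_Nil) (rule permutes_id)
next
  case (Cons a ws)
  then have "a \<in> Sgens n" "word_eval ws permutes {1..n}" by auto
  then show ?case by (simp only: word_eval_Cons) (rule permutes_compose, assumption, rule sgen_permutes)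
qed

definition invs :: "nat \<Rightarrow> (nat \<Rightarrow> nat) \<Rightarrow> (nat \<times> nat) set" where
  "invs n x = {(p,q). 1 \<le> p \<and> p < q \<and> q \<le> n \<and> x q < x p}"

definition ninv :: "nat \<Rightarrow> (nat \<Rightarrow> nat) \<Rightarrow> nat" where
  "ninv n x = card (invs n x)"

lemma finite_invs[simp]: "finite (invs n x)"
  by (rule finite_subset[of _ "{1..n} \<times> {1..n}"]) (auto simp: invs_def)

lemma inv_in: "x permutes {1..n} \<Longrightarrow> y \<in> {1..n} \<Longrightarrow> inv x y \<in> {1..n}"
  by (meson permutes_in_image permutes_inv)

lemma ninv_left_up:
  assumes x: "x permutes {1..n}" and j: "1 \<le> j" "j < n" and lt: "inv x j < inv x (Suc j)"
  shows "ninv n (sgen j \<circ> x) = Suc (ninv n x)"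
proof -
  define P where "P = (inv x j, inv x (Suc j))"
  have r1: "inv x j \<in> {1..n}" "inv x (Suc j) \<in> {1..n}" using inv_in[OF x] j by auto
  have e1: "x (inv x j) = j" "x (inv x (Suc j)) = Suc j" using permutes_inverses[OF x] by auto
  have "invs n (sgen j \<circ> x) = insert P (invs n x)"
  proof (rule set_eqI, clarify)
    fix p q
    show "((p,q) \<in> invs n (sgen j \<circ> x)) = ((p,q) \<in> insert P (invs n x))"
    proof (cases "x p = j \<and> x q = Suc j \<or> x p = Suc j \<and> x q = j")
      case True
      then show ?thesis using lt r1 e1 permutes_inverses[OF x]
        unfolding invs_def P_def sgen_def
        by (auto simp: transpose_def) (metis lessI not_less_iff_gr_or_eq)+
    next
      case False
      then show ?thesis using lt r1 e1 permutes_inverses[OF x]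
        unfolding invs_def P_def sgen_def
        by (auto simp: transpose_def split: if_splits)
    qed
  qed
  moreover have "P \<notin> invs n x" using e1 unfolding invs_def P_def by auto
  ultimately show ?thesis unfolding ninv_def by simp
qed

lemma inv_sgen_comp:
  assumes x: "x permutes {1..n}" and j: "j \<in> Sgens n"
  shows "inv (sgen j \<circ> x) v = inv x (sgen j v)"
proof -
  have p: "sgen j \<circ> x permutes {1..n}" using permutes_compose[OF x sgen_permutes[OF j]] .
  show ?thesis using permutes_inv_eq[OF p] permutes_inverses[OF x] by simp
qed

lemma ninv_left_down:
  assumes x: "x permutes {1..n}" and j: "1 \<le> j" "j < n" and lt: "inv x (Suc j) < inv x j"
  shows "Suc (ninv n (sgen j \<circ> x)) = ninv n x"
proof -
  have jS: "j \<in> Sgens n" using j by (simp add: Sgens_def)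
  have p: "sgen j \<circ> x permutes {1..n}" using permutes_compose[OF x sgen_permutes[OF jS]] .
  have "inv (sgen j \<circ> x) j < inv (sgen j \<circ> x) (Suc j)"
  proof -
    have "sgen j j = Suc j" "sgen j (Suc j) = j" by (auto simp: sgen_def)
    then show ?thesis using lt inv_sgen_comp[OF x jS, of j] inv_sgen_comp[OF x jS, of "Suc j"] by simp
  qed
  from ninv_left_up[OF p j this] have "ninv n (sgen j \<circ> (sgen j \<circ> x)) = Suc (ninv n (sgen j \<circ> x))" .
  moreover have "sgen j \<circ> (sgen j \<circ> x) = x" by (simp add: o_assoc)
  ultimately show ?thesis by simp
qed

lemma ninv_right_up:
  assumes x: "x permutes {1..n}" and j: "1 \<le> j" "j < n" and lt: "x j < x (Suc j)"
  shows "ninv n (x \<circ> sgen j) = Suc (ninv n x)"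
proof -
  define s where "s = sgen j"
  define \<sigma> where "\<sigma> = map_prod s s"
  have sj: "s j = Suc j" "s (Suc j) = j" by (auto simp: s_def sgen_def)
  have so: "\<And>v. v \<noteq> j \<Longrightarrow> v \<noteq> Suc j \<Longrightarrow> s v = v" by (auto simp: s_def sgen_def)
  have ss: "\<And>v. s (s v) = v" by (simp add: s_def)
  have mono: "\<And>p q. p < q \<Longrightarrow> (p,q) \<noteq> (j, Suc j) \<Longrightarrow> s p < s q"
    unfolding s_def sgen_def transpose_def by auto
  have rng: "\<And>v. 1 \<le> v \<Longrightarrow> v \<le> n \<Longrightarrow> 1 \<le> s v \<and> s v \<le> n"
    using j unfolding s_def sgen_def transpose_def by auto
  have inj: "inj \<sigma>" proof -
    have "inj s" by (rule inj_on_inverseI[where g=s]) (simp add: ss)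
    then show ?thesis unfolding \<sigma>_def using prod.inj_map by blast
  qed
  have "invs n (x \<circ> s) = insert (j, Suc j) (\<sigma> ` invs n x)"
  proof (rule set_eqI, clarify)
    fix p q
    show "((p,q) \<in> invs n (x \<circ> s)) = ((p,q) \<in> insert (j, Suc j) (\<sigma> ` invs n x))"
    proof (cases "(p,q) = (j, Suc j)")
      case True then show ?thesis using lt j sj by (auto simp: invs_def)
    next
      case False
      have "(p,q) \<in> \<sigma> ` invs n x \<longleftrightarrow> (s p, s q) \<in> invs n x"
      proof
        assume "(p,q) \<in> \<sigma> ` invs n x"
        then obtain a b where "(a,b) \<in> invs n x" "p = s a" "q = s b" by (auto simp: \<sigma>_def)
        then show "(s p, s q) \<in> invs n x" using ss by simp
      next
        assume "(s p, s q) \<in> invs n x"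
        then have "\<sigma> (s p, s q) \<in> \<sigma> ` invs n x" by blast
        then show "(p,q) \<in> \<sigma> ` invs n x" by (simp add: \<sigma>_def ss)
      qed
      moreover have "(p,q) \<in> invs n (x \<circ> s) \<longleftrightarrow> (s p, s q) \<in> invs n x"
      proof
        assume a: "(p,q) \<in> invs n (x \<circ> s)"
        then have "s p < s q" using mono False by (auto simp: invs_def)
        then show "(s p, s q) \<in> invs n x" using a rng by (auto simp: invs_def)
      next
        assume a: "(s p, s q) \<in> invs n x"
        then have "(s p, s q) \<noteq> (j, Suc j)" using lt by (auto simp: invs_def)
        then have "s (s p) < s (s q)" using mono a by (auto simp: invs_def)
        then show "(p,q) \<in> invs n (x \<circ> s)" using a rng[of "s p"] rng[of "s q"] ss by (auto simp: invs_def)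
      qed
      ultimately show ?thesis using False by auto
    qed
  qed
  moreover have "(j, Suc j) \<notin> \<sigma> ` invs n x"
  proof
    assume "(j, Suc j) \<in> \<sigma> ` invs n x"
    then obtain a b where "(a,b) \<in> invs n x" "j = s a" "Suc j = s b" by (auto simp: \<sigma>_def)
    then have "a = Suc j" "b = j" using ss sj by metis+
    then show False using \<open>(a,b) \<in> invs n x\<close> by (auto simp: invs_def)
  qed
  moreover have "card (\<sigma> ` invs n x) = card (invs n x)"
    using inj by (simp add: card_image inj_on_subset)
  ultimately show ?thesis unfolding ninv_def s_def[symmetric] by simp
qed

lemma ninv_right_down:
  assumes x: "x permutes {1..n}" and j: "1 \<le> j" "j < n" and lt: "x (Suc j) < x j"
  shows "Suc (ninv n (x \<circ> sgen j)) = ninv n x"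
proof -
  have jS: "j \<in> Sgens n" using j by (simp add: Sgens_def)
  have p: "x \<circ> sgen j permutes {1..n}" using permutes_compose[OF sgen_permutes[OF jS] x] .
  have "(x \<circ> sgen j) j < (x \<circ> sgen j) (Suc j)" using lt by (simp add: sgen_def)
  from ninv_right_up[OF p j this] have "ninv n ((x \<circ> sgen j) \<circ> sgen j) = Suc (ninv n (x \<circ> sgen j))" .
  moreover have "(x \<circ> sgen j) \<circ> sgen j = x" by (simp add: o_assoc[symmetric])
  ultimately show ?thesis by simp
qed



lemma invs_id: "invs n (\<lambda>a. a) = {}"
  by (auto simp: invs_def)
lemma ninv_id[simp]: "ninv n id = 0" "ninv n (\<lambda>a. a) = 0"
  by (simp_all add: ninv_def invs_id id_def)

lemma Sgens_iff: "j \<in> Sgens n \<longleftrightarrow> 1 \<le> j \<and> j < n"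
  by (simp add: Sgens_def)

lemma perm_neq:
  assumes x: "x permutes {1..n}" shows "p \<noteq> q \<Longrightarrow> x p \<noteq> x q"
  using permutes_inj[OF x] by (auto dest: injD)

lemma ninv_right_le:
  assumes x: "x permutes {1..n}" and j: "j \<in> Sgens n"
  shows "ninv n (x \<circ> sgen j) \<le> Suc (ninv n x)"
proof -
  have j': "1 \<le> j" "j < n" using j by (auto simp: Sgens_iff)
  have "x j \<noteq> x (Suc j)" using perm_neq[OF x] by simp
  then consider "x j < x (Suc j)" | "x (Suc j) < x j" by linarith
  then show ?thesis
  proof cases
    case 1 then show ?thesis using ninv_right_up[OF x j'] by simp
  next
    case 2 then show ?thesis using ninv_right_down[OF x j'] by simp
  qed
qed

lemma ninv_word_le: "set ws \<subseteq> Sgens n \<Longrightarrow> ninv n (word_eval ws) \<le> length ws"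
proof (induction ws rule: rev_induct)
  case Nil then show ?case by simp
next
  case (snoc a ws)
  then have "ninv n (word_eval ws) \<le> length ws" by auto
  moreover have "ninv n (word_eval ws \<circ> sgen a) \<le> Suc (ninv n (word_eval ws))"
    using snoc.prems by (intro ninv_right_le word_eval_permutes) auto
  ultimately show ?case unfolding word_eval_snoc length_append_singleton by linarith
qed

lemma ninv_zero_id:
  assumes x: "x permutes {1..n}" and z: "ninv n x = 0"
  shows "x = id"
proof -
  have e: "invs n x = {}" using z by (simp add: ninv_def)
  have mono: "\<And>p q. 1 \<le> p \<Longrightarrow> p < q \<Longrightarrow> q \<le> n \<Longrightarrow> x p < x q"
  proof -
    fix p q assume "1 \<le> p" "p < q" "q \<le> n"
    then have "\<not> x q < x p" using e by (auto simp: invs_def)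
    moreover have "x p \<noteq> x q" using perm_neq[OF x] \<open>p < q\<close> by simp
    ultimately show "x p < x q" by simp
  qed
  have rng: "\<And>v. v \<in> {1..n} \<Longrightarrow> x v \<in> {1..n}" using permutes_in_image[OF x] by blast
  have "\<forall>m. 1 \<le> m \<and> m \<le> k \<longrightarrow> x m = m" if "k \<le> n" for k
    using that
  proof (induction k)
    case 0 then show ?case by simp
  next
    case (Suc k)
    then have IH: "\<And>m. 1 \<le> m \<Longrightarrow> m \<le> k \<Longrightarrow> x m = m" by auto
    define m' where "m' = inv x (Suc k)"
    have m'r: "m' \<in> {1..n}" unfolding m'_def using inv_in[OF x] Suc.prems by auto
    have xm': "x m' = Suc k" unfolding m'_def using permutes_inverses[OF x] by simp
    have "m' = Suc k"
    proof (rule ccontr)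
      assume ne: "m' \<noteq> Suc k"
      show False
      proof (cases "m' \<le> k")
        case True then show False using IH[of m'] m'r xm' by auto
      next
        case False
        then have "Suc k < m'" using ne by simp
        then have lt: "x (Suc k) < Suc k" using mono[of "Suc k" m'] m'r xm' by auto
        have "x (Suc k) \<in> {1..n}" using rng Suc.prems by simp
        then have "x (x (Suc k)) = x (Suc k)" using IH lt by auto
        then have "x (Suc k) = Suc k" using permutes_inj[OF x] by (auto dest: injD)
        then show False using lt by simp
      qed
    qed
    then show ?case using IH xm' by (auto simp: le_Suc_eq)
  qed
  then have "\<And>m. m \<in> {1..n} \<Longrightarrow> x m = m" by auto
  moreover have "\<And>m. m \<notin> {1..n} \<Longrightarrow> x m = m" using permutes_not_in[OF x] by auto
  ultimately show ?thesis by (auto simp: fun_eq_iff)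
qed

lemma exists_word:
  assumes x: "x permutes {1..n}"
  shows "\<exists>ws. is_word n ws x \<and> length ws = ninv n x"
proof -
  have "\<And>x. x permutes {1..n} \<Longrightarrow> ninv n x = k \<Longrightarrow> \<exists>ws. is_word n ws x \<and> length ws = k" for k
  proof (induction k)
    case 0 then show ?case using ninv_zero_id[of _ n] by (auto simp: is_word_def intro!: exI[of _ "[]"])
  next
    case (Suc k x)
    have "\<exists>j. 1 \<le> j \<and> j < n \<and> x (Suc j) < x j"
    proof (rule ccontr)
      assume "\<not> ?thesis"
      then have nd: "\<And>j. 1 \<le> j \<Longrightarrow> j < n \<Longrightarrow> \<not> x (Suc j) < x j" by blast
      have asc: "\<And>j. 1 \<le> j \<Longrightarrow> j < n \<Longrightarrow> x j < x (Suc j)"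
      proof -
        fix j assume "1 \<le> j" "j < n"
        then have "\<not> x (Suc j) < x j" by (rule nd)
        moreover have "x j \<noteq> x (Suc j)" using perm_neq[OF Suc.prems(1), of j "Suc j"] by simp
        ultimately show "x j < x (Suc j)" by linarith
      qed
      have "\<And>p q. 1 \<le> p \<Longrightarrow> p < q \<Longrightarrow> q \<le> n \<Longrightarrow> x p < x q"
      proof -
        fix p q assume a: "1 \<le> p" "p < q" "q \<le> n"
        show "x p < x q" using a
        proof (induction q)
          case 0 then show ?case by simp
        next
          case (Suc q)
          then show ?case using asc[of q] by (cases "p = q") (auto simp: less_Suc_eq)
        qed
      qed
      then have "invs n x = {}" by (force simp: invs_def)
      then show False using Suc.prems by (simp add: ninv_def)
    qed
    then obtain j where j: "1 \<le> j" "j < n" "x (Suc j) < x j" by blast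
    have jS: "j \<in> Sgens n" using j by (simp add: Sgens_iff)
    have p: "x \<circ> sgen j permutes {1..n}" using permutes_compose[OF sgen_permutes[OF jS] Suc.prems(1)] .
    have "ninv n (x \<circ> sgen j) = k" using ninv_right_down[OF Suc.prems(1) j] Suc.prems(2) by simp
    from Suc.IH[OF p this] obtain ws where ws: "is_word n ws (x \<circ> sgen j)" "length ws = k" by blast
    have "word_eval (ws @ [j]) = x"
      using ws(1) by (simp add: is_word_def word_eval_snoc o_assoc[symmetric])
    then have "is_word n (ws @ [j]) x" using ws(1) jS by (auto simp: is_word_def)
    then show ?case using ws(2) by (intro exI[of _ "ws @ [j]"]) simp
  qed
  then show ?thesis using x by blast
qed

lemma len_eq:
  assumes x: "x permutes {1..n}"
  shows "len n x = ninv n x"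
proof -
  obtain ws where ws: "is_word n ws x" "length ws = ninv n x" using exists_word[OF x] by blast
  have ex: "\<exists>vs. is_word n vs x \<and> length vs = ninv n x" using ws by blast
  have le: "len n x \<le> ninv n x" unfolding len_def
    by (rule Least_le[of "\<lambda>k. \<exists>ws. is_word n ws x \<and> length ws = k"]) (rule ex)
  have "\<exists>ws. is_word n ws x \<and> length ws = len n x"
    unfolding len_def by (rule LeastI[of "\<lambda>k. \<exists>ws. is_word n ws x \<and> length ws = k"]) (rule ex)
  then obtain vs where vs: "is_word n vs x" "length vs = len n x" by blast
  have "ninv n x \<le> len n x" using ninv_word_le[of vs n] vs by (auto simp: is_word_def)
  then show ?thesis using le by simp
qed

lemma exists_reduced:
  assumes x: "x permutes {1..n}"
  shows "\<exists>ws. reduced_word n ws x"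
  using exists_word[OF x] len_eq[OF x] by (auto simp: reduced_word_def)

lemma DR_iff:
  assumes x: "x permutes {1..n}" and j: "j \<in> Sgens n"
  shows "j \<in> DR n x \<longleftrightarrow> x (Suc j) < x j"
proof -
  have j': "1 \<le> j" "j < n" using j by (auto simp: Sgens_iff)
  have p: "x \<circ> sgen j permutes {1..n}" using permutes_compose[OF sgen_permutes[OF j] x] .
  have "x j \<noteq> x (Suc j)" using perm_neq[OF x] by simp
  then consider "x j < x (Suc j)" | "x (Suc j) < x j" by linarith
  then show ?thesis
  proof cases
    case 1 then show ?thesis using ninv_right_up[OF x j'] j
      by (simp add: DR_def len_eq[OF x] len_eq[OF p])
  next
    case 2 then show ?thesis using ninv_right_down[OF x j'] j
      by (simp add: DR_def len_eq[OF x] len_eq[OF p])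
  qed
qed

lemma DL_iff:
  assumes x: "x permutes {1..n}" and j: "j \<in> Sgens n"
  shows "j \<in> DL n x \<longleftrightarrow> inv x (Suc j) < inv x j"
proof -
  have j': "1 \<le> j" "j < n" using j by (auto simp: Sgens_iff)
  have p: "sgen j \<circ> x permutes {1..n}" using permutes_compose[OF x sgen_permutes[OF j]] .
  have ix: "inv x permutes {1..n}" using permutes_inv[OF x] .
  have "inv x j \<noteq> inv x (Suc j)" using perm_neq[OF ix] by simp
  then consider "inv x j < inv x (Suc j)" | "inv x (Suc j) < inv x j" by linarith
  then show ?thesis
  proof cases
    case 1 then show ?thesis using ninv_left_up[OF x j'] j
      by (simp add: DL_def len_eq[OF x] len_eq[OF p])
  next
    case 2 then show ?thesis using ninv_left_down[OF x j'] j
      by (simp add: DL_def len_eq[OF x] len_eq[OF p])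
  qed
qed



lemma supp_sub: "supp n x \<subseteq> Sgens n"
  by (auto simp: supp_def reduced_word_def is_word_def)

lemma sgen_mem: "1 \<le> a \<Longrightarrow> a \<noteq> j \<Longrightarrow> (sgen a v \<in> {1..j}) = (v \<in> {1..j})"
  by (auto simp: sgen_def transpose_def)

lemma sgen_image:
  assumes a: "1 \<le> a" "a \<noteq> j"
  shows "sgen a ` {1..j} = {1..j}"
proof (rule set_eqI)
  fix v
  have m: "\<And>u. (sgen a u \<in> {1..j}) = (u \<in> {1..j})" using sgen_mem[OF a] by blast
  show "(v \<in> sgen a ` {1..j}) = (v \<in> {1..j})"
  proof
    assume "v \<in> sgen a ` {1..j}"
    then obtain u where "u \<in> {1..j}" "v = sgen a u" by blast
    then show "v \<in> {1..j}" using m by simp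
  next
    assume "v \<in> {1..j}"
    then have "sgen a v \<in> {1..j}" using m by simp
    then have "sgen a (sgen a v) \<in> sgen a ` {1..j}" by (rule imageI)
    then show "v \<in> sgen a ` {1..j}" by simp
  qed
qed

lemma stab_word: "set ws \<subseteq> Sgens n \<Longrightarrow> j \<notin> set ws \<Longrightarrow> word_eval ws ` {1..j} = {1..j}"
proof (induction ws)
  case Nil then show ?case by simp
next
  case (Cons a ws)
  then have "1 \<le> a" "a \<noteq> j" by (auto simp: Sgens_iff)
  moreover have "word_eval ws ` {1..j} = {1..j}" using Cons by auto
  moreover have "word_eval (a#ws) ` {1..j} = sgen a ` (word_eval ws ` {1..j})"
    by (simp only: word_eval_Cons image_comp)
  ultimately show ?case using sgen_image by metis
qed

lemma supp_easy:
  assumes x: "x permutes {1..n}" and ne: "x ` {1..j} \<noteq> {1..j}"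
  shows "j \<in> supp n x"
proof -
  obtain ws where ws: "reduced_word n ws x" using exists_reduced[OF x] by blast
  have "j \<in> set ws"
  proof (rule ccontr)
    assume "j \<notin> set ws"
    moreover have "set ws \<subseteq> Sgens n" using ws by (auto simp: reduced_word_def is_word_def)
    ultimately have "word_eval ws ` {1..j} = {1..j}" by (intro stab_word)
    then show False using ne ws by (auto simp: reduced_word_def is_word_def)
  qed
  then show ?thesis using ws by (auto simp: supp_def)
qed

definition gsum :: "nat \<Rightarrow> (nat \<Rightarrow> nat) \<Rightarrow> nat" where
  "gsum j y = (\<Sum>p\<in>{1..j}. y p)"

lemma gsum_other:
  assumes "1 \<le> a" "a \<noteq> j"
  shows "gsum j (y \<circ> sgen a) = gsum j y"
proof -
  have inj: "inj_on (sgen a) {1..j}" by (rule inj_on_inverseI[where g="sgen a"]) simp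
  have "gsum j y = sum y (sgen a ` {1..j})" using sgen_image[OF assms] by (simp add: gsum_def)
  also have "\<dots> = sum (y \<circ> sgen a) {1..j}" using sum.reindex[OF inj] by simp
  finally show ?thesis by (simp add: gsum_def)
qed

lemma gsum_same:
  assumes "1 \<le> j"
  shows "gsum j (y \<circ> sgen j) + y j = gsum j y + y (Suc j)"
proof -
  have A: "{1..j} = insert j {1..<j}" using assms by auto
  have "gsum j (y \<circ> sgen j) = (\<Sum>p\<in>{1..<j}. y p) + y (Suc j)"
  proof -
    have "(\<Sum>p\<in>{1..<j}. y (sgen j p)) = (\<Sum>p\<in>{1..<j}. y p)"
      by (rule sum.cong) (auto simp: sgen_def transpose_def)
    moreover have "sgen j j = Suc j" by (simp add: sgen_def)
    ultimately show ?thesis unfolding gsum_def A by simp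
  qed
  moreover have "gsum j y = (\<Sum>p\<in>{1..<j}. y p) + y j" unfolding gsum_def A by simp
  ultimately show ?thesis by simp
qed

lemma gsum_word:
  "set ws \<subseteq> Sgens n \<Longrightarrow> ninv n (word_eval ws) = length ws \<Longrightarrow> 1 \<le> j \<Longrightarrow>
   (\<Sum>p\<in>{1..j}. p) + (if j \<in> set ws then 1 else 0) \<le> gsum j (word_eval ws)"
proof (induction ws rule: rev_induct)
  case Nil then show ?case by (simp add: gsum_def)
next
  case (snoc a ws)
  define y where "y = word_eval ws"
  have aS: "a \<in> Sgens n" and wsS: "set ws \<subseteq> Sgens n" using snoc.prems by auto
  have a': "1 \<le> a" "a < n" using aS by (auto simp: Sgens_iff)
  have yp: "y permutes {1..n}" unfolding y_def using word_eval_permutes[OF wsS] .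
  have ev: "word_eval (ws @ [a]) = y \<circ> sgen a" by (simp only: y_def word_eval_snoc)
  have e: "ninv n (y \<circ> sgen a) = Suc (length ws)"
    using snoc.prems(2) unfolding ev length_append_singleton .
  have le1: "ninv n y \<le> length ws" unfolding y_def using ninv_word_le[OF wsS] .
  have le2: "ninv n (y \<circ> sgen a) \<le> Suc (ninv n y)" using ninv_right_le[OF yp aS] .
  have eq: "ninv n y = length ws" using e le1 le2 by simp
  have asc: "y a < y (Suc a)"
  proof (rule ccontr)
    assume "\<not> y a < y (Suc a)"
    moreover have "y a \<noteq> y (Suc a)" using perm_neq[OF yp] by simp
    ultimately have "y (Suc a) < y a" by simp
    from ninv_right_down[OF yp a' this] show False using e eq by simp
  qed
  have IH: "(\<Sum>p\<in>{1..j}. p) + (if j \<in> set ws then 1 else 0) \<le> gsum j y"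
    using snoc.IH[OF wsS] eq snoc.prems(3) by (simp add: y_def)
  show ?case
  proof (cases "a = j")
    case True
    have "gsum j (y \<circ> sgen a) + y a = gsum j y + y (Suc a)" using gsum_same[OF snoc.prems(3)] True by simp
    then have "gsum j y < gsum j (y \<circ> sgen a)" using asc by simp
    have IH': "(\<Sum>p\<in>{1..j}. p) \<le> gsum j y" using IH by (simp split: if_splits)
    have "j \<in> set (ws @ [a])" using True by simp
    show ?thesis unfolding ev if_P[OF \<open>j \<in> set (ws @ [a])\<close>] using IH' \<open>gsum j y < gsum j (y \<circ> sgen a)\<close> by linarith
  next
    case False
    have se: "(j \<in> set (ws @ [a])) = (j \<in> set ws)" using False by auto
    show ?thesis unfolding ev se gsum_other[OF a'(1) False, of y] using IH .
  qed
qed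

lemma supp_hard:
  assumes j: "j \<in> supp n x"
  shows "x ` {1..j} \<noteq> {1..j}"
proof
  assume st: "x ` {1..j} = {1..j}"
  obtain ws where ws: "reduced_word n ws x" "j \<in> set ws" using j by (auto simp: supp_def)
  have wsS: "set ws \<subseteq> Sgens n" and wx: "word_eval ws = x" using ws by (auto simp: reduced_word_def is_word_def)
  have xp: "x permutes {1..n}" using word_eval_permutes[OF wsS] wx by simp
  have "ninv n x = length ws" using ws len_eq[OF xp] by (simp add: reduced_word_def)
  have j1: "1 \<le> j" using ws wsS by (auto simp: Sgens_iff)
  have "(\<Sum>p\<in>{1..j}. p) + 1 \<le> gsum j x"
    using gsum_word[OF wsS _ j1] ws(2) wx \<open>ninv n x = length ws\<close> by simp
  moreover have "gsum j x = (\<Sum>p\<in>{1..j}. p)"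
  proof -
    have inj: "inj_on x {1..j}" using permutes_inj_on[OF xp] .
    have "gsum j x = sum id (x ` {1..j})" using sum.reindex[OF inj, of id] by (simp add: gsum_def)
    also have "\<dots> = (\<Sum>p\<in>{1..j}. p)" using st by (simp add: gsum_def)
    finally show ?thesis .
  qed
  ultimately show False by simp
qed



lemma fix_word: "set ws \<subseteq> {i..<n} \<Longrightarrow> k < i \<Longrightarrow> word_eval ws k = k"
proof (induction ws)
  case Nil then show ?case by simp
next
  case (Cons a ws)
  then have "a \<ge> i" "word_eval ws k = k" by auto
  then show ?case using Cons.prems by (simp add: sgen_def transpose_def)
qed

theorem proposition5p4:
  fixes n i :: nat and w :: "nat \<Rightarrow> nat"
  assumes "right_almost_reducible n w i"
  shows "Max (w ` {1..<i}) = i + 1 \<and> w i > i + 1 \<and>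
    (\<forall>a b. a \<in> {1..i+1} - w ` {1..<i} \<and> b \<in> {1..i+1} - w ` {1..<i} \<and> a < b
               \<longrightarrow> inv w b < inv w a)"
proof -
  define J where "J = {i..<n}"
  have irr: "bruhat_irreducible n w" and JS: "J \<subseteq> Sgens n"
    and nDL: "i \<notin> DL n w" and nDR: "i \<notin> DR n w"
    and exu: "\<exists>u. BP_decomp n J w u \<and> supp n u \<inter> J = {i}"
    using assms by (auto simp: right_almost_reducible_def almost_reducible_def J_def)
  obtain u where bp: "BP_decomp n J w u" and su: "supp n u \<inter> J = {i}" using exu by blast
  have wp: "w permutes {1..n}" using irr by (simp add: bruhat_irreducible_def perm_Sn_def)
  have iS: "i \<in> Sgens n" using su supp_sub by blast
  have i1: "1 \<le> i" "i < n" using iS by (auto simp: Sgens_iff)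
  have iu: "i \<in> supp n u" using su by blast
  have mc: "min_coset_rep n J w u" and dl: "supp n u \<inter> J \<subseteq> DL n (inv u \<circ> w)"
    using bp by (auto simp: BP_decomp_def)
  obtain vs where vs: "set vs \<subseteq> J" and uw: "u = w \<circ> word_eval vs"
    using mc by (auto simp: min_coset_rep_def parabolic_def)
  have minl: "\<And>v. v \<in> parabolic J \<Longrightarrow> len n u \<le> len n (w \<circ> v)"
    using mc by (auto simp: min_coset_rep_def)
  define v where "v = word_eval vs"
  have vp: "v permutes {1..n}" unfolding v_def using word_eval_permutes vs JS by blast
  have up: "u permutes {1..n}" unfolding uw v_def[symmetric] using permutes_compose[OF vp wp] .
  have ufix: "\<And>k. k < i \<Longrightarrow> u k = w k" using fix_word vs uw by (simp add: J_def)
  have uinc: "\<And>j. i \<le> j \<Longrightarrow> j < n \<Longrightarrow> u j < u (Suc j)"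
  proof (rule ccontr)
    fix j assume j: "i \<le> j" "j < n" and nl: "\<not> u j < u (Suc j)"
    have jS: "j \<in> Sgens n" using j i1 by (simp add: Sgens_iff)
    have "u j \<noteq> u (Suc j)" using perm_neq[OF up] by simp
    then have "u (Suc j) < u j" using nl by simp
    then have "j \<in> DR n u" using DR_iff[OF up jS] by simp
    then have lt: "len n (u \<circ> sgen j) < len n u" by (simp add: DR_def)
    have "set (vs @ [j]) \<subseteq> J" using vs j by (auto simp: J_def)
    then have "word_eval (vs @ [j]) \<in> parabolic J" unfolding parabolic_def by blast
    then have "len n u \<le> len n (w \<circ> word_eval (vs @ [j]))" by (rule minl)
    also have "w \<circ> word_eval (vs @ [j]) = u \<circ> sgen j" by (simp add: uw word_eval_snoc o_assoc)
    finally have "len n u \<le> len n (u \<circ> sgen j)" .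
    with lt show False by linarith
  qed
  have ustab: "\<And>j. Suc i \<le> j \<Longrightarrow> j < n \<Longrightarrow> u ` {1..j} = {1..j}"
  proof -
    fix j assume j: "Suc i \<le> j" "j < n"
    then have "j \<in> J" "j \<noteq> i" by (auto simp: J_def)
    then have "j \<notin> supp n u" using su by blast
    then show "u ` {1..j} = {1..j}" using supp_easy[OF up] by blast
  qed
  have u1: "u ` {1..Suc i} = {1..Suc i}"
  proof (cases "Suc i < n")
    case True then show ?thesis using ustab by simp
  next
    case False then have "Suc i = n" using i1 by simp
    then show ?thesis using permutes_image[OF up] by simp
  qed
  have u2: "u ` {1..i} \<noteq> {1..i}" using supp_hard[OF iu] .
  have uinj: "inj_on u A" for A using permutes_inj_on[OF up] .
  have ub: "u (Suc i) \<le> i"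
  proof (rule ccontr)
    assume "\<not> u (Suc i) \<le> i"
    moreover have "u (Suc i) \<in> {1..Suc i}" using u1 by auto
    ultimately have e: "u (Suc i) = Suc i" by simp
    have "u ` {1..i} = u ` ({1..Suc i} - {Suc i})" by (simp add: atLeastAtMostSuc_conv)
    also have "\<dots> = u ` {1..Suc i} - u ` {Suc i}" by (rule inj_on_image_set_diff[OF uinj]) auto
    also have "\<dots> = {1..i}" using u1 e by auto
    finally show False using u2 by simp
  qed
  define a where "a = u i"
  define b where "b = u (Suc i)"
  have ab: "a < b" "b \<le> i" using uinc[of i] i1 ub by (auto simp: a_def b_def)
  have "u i \<in> u ` {1..Suc i}" using i1 by auto
  then have a1: "1 \<le> a" using u1 unfolding a_def by simp
  have wimg: "w ` {1..<i} = {1..Suc i} - {a, b}"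
  proof -
    have "w ` {1..<i} = u ` {1..<i}" using ufix by (auto intro: image_cong)
    also have "\<dots> = u ` ({1..Suc i} - {i, Suc i})" by (rule arg_cong[where f="image u"]) auto
    also have "\<dots> = u ` {1..Suc i} - u ` {i, Suc i}"
      by (rule inj_on_image_set_diff[OF uinj]) (use i1 in auto)
    also have "\<dots> = {1..Suc i} - {a, b}" using u1 by (simp add: a_def b_def)
    finally show ?thesis .
  qed
  have compl: "{1..i+1} - w ` {1..<i} = {a, b}" using wimg ab a1 by auto
  have c1: "Max (w ` {1..<i}) = i + 1"
    unfolding wimg by (rule Max_eqI) (use ab in auto)
  have ba: "inv w b < inv w a"
  proof -
    have "i \<in> DL n (inv u \<circ> w)" using dl iu i1 by (auto simp: J_def)
    moreover have wJp: "inv u \<circ> w permutes {1..n}" using permutes_compose[OF wp permutes_inv[OF up]] .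
    ultimately have "inv (inv u \<circ> w) (Suc i) < inv (inv u \<circ> w) i" using DL_iff[OF wJp iS] by simp
    moreover have "inv (inv u \<circ> w) = inv w \<circ> u"
    proof -
      have "inv (inv u \<circ> w) = inv w \<circ> inv (inv u)"
        by (rule o_inv_distrib) (use permutes_bij[OF wp] permutes_bij[OF permutes_inv[OF up]] in auto)
      then show ?thesis using permutes_inv_inv[OF up] by simp
    qed
    ultimately show ?thesis by (simp add: a_def b_def)
  qed
  have c3: "\<forall>a' b'. a' \<in> {1..i+1} - w ` {1..<i} \<and> b' \<in> {1..i+1} - w ` {1..<i} \<and> a' < b'
               \<longrightarrow> inv w b' < inv w a'"
    unfolding compl using ab ba by auto
  have c2: "w i > i + 1"
  proof (rule ccontr)
    assume "\<not> w i > i + 1"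
    moreover have "w i \<in> {1..n}" using permutes_in_image[OF wp] i1 by simp
    moreover have "w i \<notin> w ` {1..<i}"
    proof
      assume "w i \<in> w ` {1..<i}"
      then obtain k where k: "k \<in> {1..<i}" "w i = w k" by blast
      then have "i = k" using perm_neq[OF wp, of i k] by blast
      then show False using k by simp
    qed
    ultimately have "w i \<in> {1..i+1} - w ` {1..<i}" by simp
    then have "w i \<in> {a, b}" by (simp only: compl)
    then consider "w i = a" | "w i = b" by blast
    then show False
    proof cases
      case 1
      then have "inv w a = i" using permutes_inverses[OF wp] by metis
      then have lt: "inv w b < i" using ba by simp
      have "b \<in> {1..n}" using ab a1 i1 by auto
      then have "inv w b \<in> {1..n}" using inv_in[OF wp] by blast
      then have "w (inv w b) \<in> w ` {1..<i}" using lt by auto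
      then have "b \<in> w ` {1..<i}" using permutes_inverses[OF wp] by simp
      then show False using compl by auto
    next
      case 2
      define x where "x = u \<circ> sgen i"
      define y where "y = inv x \<circ> w"
      have xp: "x permutes {1..n}" unfolding x_def using permutes_compose[OF sgen_permutes[OF iS] up] .
      have yp: "y permutes {1..n}" unfolding y_def using permutes_compose[OF wp permutes_inv[OF xp]] .
      have wxy: "w = x \<circ> y" unfolding y_def using permutes_inv_o[OF xp] by (simp add: o_assoc)
      have xi: "x i = b" "x (Suc i) = a" by (simp_all add: x_def a_def b_def sgen_def)
      have xlow: "\<And>k. k < i \<Longrightarrow> x k = w k" using ufix by (simp add: x_def sgen_def transpose_def)
      have xne: "x \<noteq> id"
      proof
        assume "x = id"
        then have "x (Suc i) = Suc i" by simp
        then show False using xi ab by simp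
      qed
      have yne: "y \<noteq> id"
      proof
        assume "y = id"
        then have "w = x" using wxy by simp
        then have "w (Suc i) < w i" using xi ab by simp
        then have "i \<in> DR n w" using DR_iff[OF wp iS] by simp
        then show False using nDR by simp
      qed
      have yfix: "\<And>k. k \<le> i \<Longrightarrow> y k = k"
      proof -
        fix k assume "k \<le> i"
        then have "x k = w k" using xlow xi 2 by (cases "k = i") auto
        then have "inv x (w k) = k" using permutes_inverses[OF xp] by metis
        then show "y k = k" by (simp add: y_def)
      qed
      have disj: "supp n x \<inter> supp n y = {}"
      proof (rule ccontr)
        assume "supp n x \<inter> supp n y \<noteq> {}"
        then obtain j where jx: "j \<in> supp n x" and jy: "j \<in> supp n y" by blast
        have jS: "j \<in> Sgens n" using jx supp_sub by blast
        show False
        proof (cases "j \<le> i")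
          case True
          have "y ` {1..j} = {1..j}"
          proof -
            have "y ` {1..j} = id ` {1..j}" by (rule image_cong) (use True yfix in auto)
            then show ?thesis by simp
          qed
          then show False using supp_hard[OF jy] by simp
        next
          case False
          then have j: "Suc i \<le> j" "j < n" using jS by (auto simp: Sgens_iff)
          have "x ` {1..j} = u ` (sgen i ` {1..j})" by (simp add: x_def image_comp)
          also have "sgen i ` {1..j} = {1..j}" using sgen_image[OF i1(1)] j by simp
          also have "u ` {1..j} = {1..j}" using ustab j by simp
          finally show False using supp_hard[OF jx] by simp
        qed
      qed
      have "perm_Sn n x" "perm_Sn n y" using xp yp by (simp_all add: perm_Sn_def)
      then show False using irr wxy xne yne disj unfolding bruhat_irreducible_def by blast
    qed
  qed
  show ?thesis using c1 c2 c3 by blast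
qed


end
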